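(* Let $k$ be a positive integer and let $G$ be a finite graph. If $G$ has a $k$-prime product distance labeling, then $G$ is $2^{k+1}$-colorable.
   Context: A $k$-prime product distance labeling of a graph $G$ is an injective map $L:V(G)\to\mathbb{Z}$ such that $|L(u)-L(v)|>1$ for all distinct vertices $u,v$ of $G$, and such that for every pair of adjacent vertices $u,v$ the integer $|L(u)-L(v)|$ has at most $k$ prime factors counted with multiplicity. A graph is $m$-colorable if its vertices can be colored with $m$ colors so that adjacent vertices receive different colors. *)

theory Defs
  imports Main "HOL-Computational_Algebra.Primes" "HOL-Library.Multiset"
begin

definition simple_graph :: "'a set \<Rightarrow> ('a \<Rightarrow> 'a \<Rightarrow> bool) \<Rightarrow> bool" where
  "simple_graph V E \<longleftrightarrow> finite V \<and> (\<forall>u v. E u v \<longrightarrow> u \<in> V \<and> v \<in> V) \<and>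
     (\<forall>u v. E u v \<longrightarrow> E v u) \<and> (\<forall>v. \<not> E v v)"

definition num_prime_factors :: "nat \<Rightarrow> nat" where
  "num_prime_factors n = size (prime_factorization n)"

definition prime_product_distance_labeling ::
  "nat \<Rightarrow> 'a set \<Rightarrow> ('a \<Rightarrow> 'a \<Rightarrow> bool) \<Rightarrow> ('a \<Rightarrow> int) \<Rightarrow> bool" where
  "prime_product_distance_labeling k V E L \<longleftrightarrow>
     inj_on L V \<and>
     (\<forall>u\<in>V. \<forall>v\<in>V. u \<noteq> v \<longrightarrow> \<bar>L u - L v\<bar> > 1) \<and>
     (\<forall>u\<in>V. \<forall>v\<in>V. E u v \<longrightarrow> num_prime_factors (nat \<bar>L u - L v\<bar>) \<le> k)"

definition colorable :: "nat \<Rightarrow> 'a set \<Rightarrow> ('a \<Rightarrow> 'a \<Rightarrow> bool) \<Rightarrow> bool" where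
  "colorable m V E \<longleftrightarrow>
     (\<exists>c :: 'a \<Rightarrow> nat. (\<forall>v\<in>V. c v < m) \<and> (\<forall>u\<in>V. \<forall>v\<in>V. E u v \<longrightarrow> c u \<noteq> c v))"

end

theory Submission
  imports Defs
begin

lemma pf_pow2: "size (prime_factorization ((2::nat) ^ n)) = n"
proof (induction n)
  case 0 then show ?case by simp
next
  case (Suc n)
  have "prime_factorization ((2::nat) ^ Suc n) = prime_factorization 2 + prime_factorization ((2::nat)^n)"
    by (simp add: prime_factorization_mult)
  also have "\<dots> = {#2#} + prime_factorization ((2::nat)^n)"
    by (simp add: prime_factorization_prime)
  finally show ?case using Suc by simp
qed

lemma omega_ge: assumes "(2::nat)^n dvd m" "m \<noteq> 0" shows "num_prime_factors m \<ge> n"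
proof -
  have "prime_factorization ((2::nat)^n) \<subseteq># prime_factorization m"
    using assms by (simp add: prime_factorization_subset_iff_dvd)
  then have "size (prime_factorization ((2::nat)^n)) \<le> size (prime_factorization m)"
    by (rule size_mset_mono)
  then show ?thesis by (simp add: pf_pow2 num_prime_factors_def)
qed

theorem mainTheorem1:
  fixes V :: "'a set" and E :: "'a \<Rightarrow> 'a \<Rightarrow> bool" and k :: nat
  assumes "k \<ge> 1"
    and "simple_graph V E"
    and "\<exists>L. prime_product_distance_labeling k V E L"
  shows "colorable (2 ^ (k + 1)) V E"
proof -
  obtain L where L: "prime_product_distance_labeling k V E L" using assms(3) by blast
  define M :: int where "M = 2 ^ (k+1)"
  have Mpos: "M > 0" by (simp add: M_def)
  define c where "c v = nat (L v mod M)" for v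
  show ?thesis unfolding colorable_def
  proof (intro exI conjI ballI impI)
    fix v assume "v \<in> V"
    have "L v mod M < M" using Mpos by simp
    moreover have "L v mod M \<ge> 0" using Mpos by simp
    moreover have "M = int (2^(k+1))" by (simp add: M_def)
    ultimately show "c v < 2 ^ (k+1)" unfolding c_def
      by (simp add: nat_less_iff)
  next
    fix u v assume u: "u \<in> V" and v: "v \<in> V" and e: "E u v"
    show "c u \<noteq> c v"
    proof
      assume "c u = c v"
      then have "L u mod M = L v mod M" unfolding c_def using Mpos
        by (metis pos_mod_sign nat_eq_iff2 nat_0_le)
      then have dv: "M dvd (L u - L v)" by (simp add: mod_eq_dvd_iff)
      have ne: "u \<noteq> v" using e assms(2) unfolding simple_graph_def by blast
      have gt: "\<bar>L u - L v\<bar> > 1" using L u v ne unfolding prime_product_distance_labeling_def by blast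
      have le: "num_prime_factors (nat \<bar>L u - L v\<bar>) \<le> k"
        using L u v e unfolding prime_product_distance_labeling_def by blast
      have "int ((2::nat)^(k+1)) dvd \<bar>L u - L v\<bar>" using dv by (simp add: M_def)
      then have "(2::nat)^(k+1) dvd nat \<bar>L u - L v\<bar>"
        by (metis abs_ge_zero nat_0_le of_nat_dvd_iff)
      then have "num_prime_factors (nat \<bar>L u - L v\<bar>) \<ge> k+1"
        using gt by (intro omega_ge) auto
      with le show False by simp
    qed
  qed
qed

end
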